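(* Let $n\ge 1$ and $1<k\le 2n$. Suppose that for every 1D array of size $n$ there is an $S(n,k)$-bit encoding from which sorted 1-sided Top-$k$ queries can be answered. Then every $2\times n$ array $A$ admits an encoding of $2S(n,k)+\lceil 2n\lg 3\rceil+o(n)$ bits from which every sorted 3-sided Top-$k$ query on $A$ can be answered.
   Context: All arrays have pairwise distinct entries from a totally ordered set. For a 1D array $B[1..n]$ and $1\le i\le j\le n$, the query Top-$k(i,j,B)$ returns the positions of the $k$ largest values of $B[i..j]$ (all positions of $B[i..j]$ if it has at most $k$ entries); a query is sorted if the positions must be reported in decreasing order of their values, unsorted if in any order; 1-sided queries are those with $i=1$, 2-sided queries allow arbitrary $i\le j$. For an $m\times n$ array $A$, Top-$k(i,j,a,b,A)$ (with $1\le i\le j\le m$, $1\le a\le b\le n$) returns the positions of the $k$ largest values in the subarray $A[i..j][a..b]$; 3-sided queries are those with $a=1$, 4-sided queries allow arbitrary $a\le b$. An $s$-bit encoding supporting a family of queries is a map assigning to each array a bit string of length at most $s$ such that every query of the family can be answered from this bit string alone, without access to the array. *)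

theory Defs
  imports Complex_Main "HOL-Library.Landau_Symbols" "HOL-Library.Product_Lexorder"
begin

definition top_k :: "nat \<Rightarrow> ('p::linorder \<Rightarrow> 'a::linorder) \<Rightarrow> 'p set \<Rightarrow> 'p list" where
  "top_k k f P = take k (rev (sort_key f (sorted_list_of_set P)))"

definition arrays1 :: "nat \<Rightarrow> (nat \<Rightarrow> 'a) set" where
  "arrays1 n = {B. inj_on B {1..n}}"

text \<open>m x n arrays A[1..m][1..n] (A i j = entry in row i, column j), distinct entries.\<close>
definition arrays2 :: "nat \<Rightarrow> nat \<Rightarrow> (nat \<Rightarrow> nat \<Rightarrow> 'a) set" where
  "arrays2 m n = {A. inj_on (\<lambda>(i, j). A i j) ({1..m} \<times> {1..n})}"

definition has_encoding :: "'x set \<Rightarrow> 'q set \<Rightarrow> ('x \<Rightarrow> 'q \<Rightarrow> 'r) \<Rightarrow> real \<Rightarrow> bool" where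
  "has_encoding X Q ans s \<longleftrightarrow>
     (\<exists>(E :: 'x \<Rightarrow> bool list) (D :: bool list \<Rightarrow> 'q \<Rightarrow> 'r).
        \<forall>x\<in>X. real (length (E x)) \<le> s \<and> (\<forall>q\<in>Q. D (E x) q = ans x q))"

definition enc_1sided :: "nat \<Rightarrow> nat \<Rightarrow> real \<Rightarrow> 'a::linorder itself \<Rightarrow> bool" where
  "enc_1sided n k s _ = has_encoding (arrays1 n :: (nat \<Rightarrow> 'a) set) {1..n}
      (\<lambda>B j. top_k k B {1..j}) s"

definition enc_3sided :: "nat \<Rightarrow> nat \<Rightarrow> nat \<Rightarrow> real \<Rightarrow> 'a::linorder itself \<Rightarrow> bool" where
  "enc_3sided m n k s _ = has_encoding (arrays2 m n :: (nat \<Rightarrow> nat \<Rightarrow> 'a) set)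
      {(i, j, b). 1 \<le> i \<and> i \<le> j \<and> j \<le> m \<and> 1 \<le> b \<and> b \<le> n}
      (\<lambda>A (i, j, b). top_k k (\<lambda>(r, c). A r c) ({i..j} \<times> {1..b})) s"

end

theory Submission imports Defs "HOL-Library.FuncSet" "HOL-Real_Asymp.Real_Asymp" begin

lemma topk_props:
  fixes f :: "'p::linorder \<Rightarrow> 'a::linorder"
  assumes fin: "finite X" and inj: "inj_on f X"
  shows "distinct (top_k k f X)" "set (top_k k f X) \<subseteq> X"
    "length (top_k k f X) = min k (card X)"
    "sorted_wrt (\<lambda>a b. f b < f a) (top_k k f X)"
    "\<forall>x\<in>set (top_k k f X). \<forall>y\<in>X - set (top_k k f X). f y < f x"
proof -
  define xs where "xs = sorted_list_of_set X"
  define R where "R = rev (sort_key f xs)"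
  have T: "top_k k f X = take k R" unfolding top_k_def R_def xs_def by simp
  have dR: "distinct R" unfolding R_def xs_def using fin by simp
  have sR: "set R = X" unfolding R_def xs_def using fin by simp
  have lR: "length R = card X" using dR sR distinct_card by fastforce
  have "distinct (map f (sort_key f xs))"
    using dR sR inj unfolding R_def by (simp add: distinct_map)
  hence "sorted_wrt (<) (map f (sort_key f xs))"
    using sorted_sort_key strict_sorted_iff by blast
  hence sw: "sorted_wrt (\<lambda>a b. f b < f a) R"
    unfolding R_def by (simp add: sorted_wrt_map sorted_wrt_rev)
  show "distinct (top_k k f X)" using T dR by simp
  show "set (top_k k f X) \<subseteq> X" using T sR by (metis set_take_subset)
  show "length (top_k k f X) = min k (card X)" using T lR by simp
  show "sorted_wrt (\<lambda>a b. f b < f a) (top_k k f X)" using T sw sorted_wrt_take by metis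
  show "\<forall>x\<in>set (top_k k f X). \<forall>y\<in>X - set (top_k k f X). f y < f x"
  proof (intro ballI)
    fix x y assume x: "x \<in> set (top_k k f X)" and y: "y \<in> X - set (top_k k f X)"
    have "R = take k R @ drop k R" by simp
    hence sw2: "sorted_wrt (\<lambda>a b. f b < f a) (take k R @ drop k R)" using sw by simp
    have "y \<in> set (drop k R)" using y sR T
      by (metis DiffE Un_iff append_take_drop_id set_append)
    have "\<forall>a\<in>set (take k R). \<forall>b\<in>set (drop k R). f b < f a"
      using sw2 unfolding sorted_wrt_append by blast
    then show "f y < f x" using \<open>y \<in> set (drop k R)\<close> x T by auto
  qed
qed

lemma list_unique:
  fixes f :: "'p \<Rightarrow> 'a::linorder"
  assumes fin: "finite X" and inj: "inj_on f X"
  and L: "distinct L" "set L \<subseteq> X" "sorted_wrt (\<lambda>a b. f b < f a) L"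
    "\<forall>x\<in>set L. \<forall>y\<in>X - set L. f y < f x"
  and M: "distinct M" "set M \<subseteq> X" "sorted_wrt (\<lambda>a b. f b < f a) M"
    "\<forall>x\<in>set M. \<forall>y\<in>X - set M. f y < f x"
  and len: "length L = length M"
  shows "L = M"
proof -
  have cL: "card (set L) = card (set M)" using L M len by (simp add: distinct_card)
  have eq: "set L = set M"
  proof (rule ccontr)
    assume ne: "set L \<noteq> set M"
    have "\<not> set L \<subseteq> set M" using ne cL by (metis card_subset_eq finite_set)
    then obtain x where x: "x \<in> set L" "x \<notin> set M" by blast
    have "\<not> set M \<subseteq> set L" using ne cL by (metis card_subset_eq finite_set)
    then obtain y where y: "y \<in> set M" "y \<notin> set L" by blast
    have "f y < f x" using L(4) x y M(2) by blast
    moreover have "f x < f y" using M(4) x y L(2) by blast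
    ultimately show False by simp
  qed
  have a: "sorted_wrt (<) (rev (map f L))" using L(3) by (simp add: sorted_wrt_map sorted_wrt_rev)
  have b: "sorted_wrt (<) (rev (map f M))" using M(3) by (simp add: sorted_wrt_map sorted_wrt_rev)
  have "rev (map f L) = rev (map f M)" using strict_sorted_equal[OF b a] eq by simp
  hence "map f L = map f M" by simp
  moreover have "inj_on f (set L \<union> set M)" using inj L(2) M(2) by (meson inj_on_subset le_sup_iff)
  ultimately show ?thesis using inj_on_map_eq_map by blast
qed

lemma topk_unique:
  fixes f :: "'p::linorder \<Rightarrow> 'a::linorder"
  assumes fin: "finite X" and inj: "inj_on f X"
  and L: "distinct L" "set L \<subseteq> X" "length L = min k (card X)" "sorted_wrt (\<lambda>a b. f b < f a) L"
    "\<forall>x\<in>set L. \<forall>y\<in>X - set L. f y < f x"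
  shows "L = top_k k f X"
proof -
  note P = topk_props[OF fin inj, of k]
  show ?thesis using list_unique[OF fin inj L(1,2,4,5) P(1,2,4,5)] L(3) P(3) by simp
qed

lemma topk_mem:
  fixes f :: "'p::linorder \<Rightarrow> 'a::linorder"
  assumes fin: "finite X" and inj: "inj_on f X"
  shows "x \<in> set (top_k k f X) \<longleftrightarrow> x \<in> X \<and> card {y\<in>X. f x < f y} < k"
proof -
  let ?T = "top_k k f X"
  note P = topk_props[OF fin inj, of k]
  show ?thesis
  proof
    assume x: "x \<in> set ?T"
    have "{y\<in>X. f x < f y} \<subseteq> set ?T - {x}"
    proof
      fix y assume y: "y \<in> {y\<in>X. f x < f y}"
      have yX: "y \<in> X" "f x < f y" using y by auto
      have "y \<in> set ?T"
      proof (rule ccontr)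
        assume "y \<notin> set ?T"
        hence "f y < f x" using P(5) x yX(1) by blast
        thus False using yX(2) by simp
      qed
      moreover have "y \<noteq> x" using y by auto
      ultimately show "y \<in> set ?T - {x}" by simp
    qed
    hence "card {y\<in>X. f x < f y} \<le> card (set ?T - {x})" by (intro card_mono) auto
    also have "\<dots> = length ?T - 1" using x P(1) by (simp add: distinct_card)
    also have "\<dots> < k" using x P(3) by (cases "length ?T") auto
    finally show "x \<in> X \<and> card {y\<in>X. f x < f y} < k" using x P(2) by auto
  next
    assume h: "x \<in> X \<and> card {y\<in>X. f x < f y} < k"
    show "x \<in> set ?T"
    proof (rule ccontr)
      assume nx: "x \<notin> set ?T"
      have "set ?T \<subseteq> {y\<in>X. f x < f y}" using P(2,5) nx h by auto
      hence "length ?T \<le> card {y\<in>X. f x < f y}"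
        using P(1) fin by (metis (no_types, lifting) card_mono distinct_card finite_subset mem_Collect_eq subsetI)
      hence "card X > k \<or> length ?T = card X" using P(3) h by linarith
      thus False
      proof
        assume "k < card X" thus False using P(3) h \<open>length ?T \<le> _\<close> by simp
      next
        assume "length ?T = card X"
        hence "set ?T = X" using P(1,2) fin by (metis card_subset_eq distinct_card)
        thus False using nx h by simp
      qed
    qed
  qed
qed

lemma topk_restrict:
  fixes f :: "'p::linorder \<Rightarrow> 'a::linorder"
  assumes fin: "finite X" and inj: "inj_on f X" and Y: "set (top_k k f X) \<subseteq> Y" "Y \<subseteq> X"
  shows "top_k k f Y = top_k k f X"
proof -
  note P = topk_props[OF fin inj, of k]
  have finY: "finite Y" using fin Y finite_subset by blast
  have injY: "inj_on f Y" using inj Y inj_on_subset by blast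
  have len: "length (top_k k f X) = min k (card Y)"
  proof (cases "card X \<le> k")
    case True
    hence "length (top_k k f X) = card X" using P(3) by simp
    hence "set (top_k k f X) = X" using P(1,2) fin by (metis card_subset_eq distinct_card)
    hence "Y = X" using Y by blast
    thus ?thesis using P(3) by simp
  next
    case False
    hence l: "length (top_k k f X) = k" using P(3) by simp
    have "k \<le> card Y" using l P(1) Y finY by (metis card_mono distinct_card)
    thus ?thesis using l by simp
  qed
  have "\<forall>x\<in>set (top_k k f X). \<forall>y\<in>Y - set (top_k k f X). f y < f x" using P(5) Y by blast
  moreover have "set (top_k k f X) \<subseteq> Y" using Y by simp
  ultimately have "top_k k f X = top_k k f Y"
    using topk_unique[OF finY injY P(1) _ len] P(4) by blast
  thus ?thesis by simp
qed

lemma topk_cong: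
  fixes f g :: "'p::linorder \<Rightarrow> 'a::linorder"
  assumes fin: "finite X" and inj: "inj_on f X" "inj_on g X"
  and ord: "\<And>x y. x\<in>X \<Longrightarrow> y\<in>X \<Longrightarrow> f x < f y \<longleftrightarrow> g x < g y"
  shows "top_k k f X = top_k k g X"
proof -
  note P = topk_props[OF fin inj(1), of k]
  have s: "sorted_wrt (\<lambda>a b. g b < g a) (top_k k f X)"
  proof (rule sorted_wrt_mono_rel[OF _ P(4)])
    fix a b assume "a \<in> set (top_k k f X)" "b \<in> set (top_k k f X)" "f b < f a"
    thus "g b < g a" using ord P(2) by blast
  qed
  have t: "\<forall>x\<in>set (top_k k f X). \<forall>y\<in>X - set (top_k k f X). g y < g x"
  proof (intro ballI)
    fix x y assume "x \<in> set (top_k k f X)" "y \<in> X - set (top_k k f X)"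
    moreover hence "f y < f x" using P(5) by blast
    ultimately show "g y < g x" using ord P(2) by blast
  qed
  show ?thesis
    using topk_unique[OF fin inj(2) P(1,2,3) s t] .
qed

lemma topk_order:
  fixes f g :: "'p::linorder \<Rightarrow> 'a::linorder"
  assumes fin: "finite X" and inj: "inj_on f X" "inj_on g X"
  and eq: "top_k k f X = top_k k g X" and x: "x \<in> set (top_k k f X)" and y: "y \<in> X"
  shows "f x < f y \<longleftrightarrow> g x < g y"
proof (cases "y \<in> set (top_k k f X)")
  case False
  have "f y < f x" using topk_props(5)[OF fin inj(1), of k] x y False by blast
  moreover have "g y < g x" using topk_props(5)[OF fin inj(2), of k] x y False eq by auto
  ultimately show ?thesis by auto
next
  case True
  let ?L = "top_k k f X"
  obtain i where i: "i < length ?L" "?L ! i = x" using x by (meson in_set_conv_nth)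
  obtain j where j: "j < length ?L" "?L ! j = y" using True by (meson in_set_conv_nth)
  have sf: "sorted_wrt (\<lambda>a b. f b < f a) ?L" using topk_props(4)[OF fin inj(1)] .
  have sg: "sorted_wrt (\<lambda>a b. g b < g a) ?L" using topk_props(4)[OF fin inj(2)] eq by simp
  show ?thesis
  proof (cases i j rule: linorder_cases)
    case less thus ?thesis using sf sg i j by (metis order.asym sorted_wrt_iff_nth_less)
  next
    case equal thus ?thesis using i j by auto
  next
    case greater thus ?thesis using sf sg i j by (metis sorted_wrt_iff_nth_less)
  qed
qed


definition rk :: "('p \<Rightarrow> 'b::linorder) \<Rightarrow> 'p set \<Rightarrow> 'p \<Rightarrow> nat" where
  "rk h E e = card {e'\<in>E. h e' < h e}"

lemma rk_less:
  assumes fin: "finite E" and inj: "inj_on h E" and x: "x \<in> E" and y: "y \<in> E"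
  shows "rk h E x < rk h E y \<longleftrightarrow> h x < h y"
proof
  assume "h x < h y"
  hence "{e'\<in>E. h e' < h x} \<subset> {e'\<in>E. h e' < h y}" using x by auto
  thus "rk h E x < rk h E y" unfolding rk_def using fin by (simp add: psubset_card_mono)
next
  assume a: "rk h E x < rk h E y"
  show "h x < h y"
  proof (rule ccontr)
    assume "\<not> h x < h y"
    hence "{e'\<in>E. h e' < h y} \<subseteq> {e'\<in>E. h e' < h x}" by auto
    hence "rk h E y \<le> rk h E x" unfolding rk_def using fin by (simp add: card_mono)
    thus False using a by simp
  qed
qed

lemma rk_bij:
  assumes fin: "finite E" and inj: "inj_on h E"
  shows "bij_betw (rk h E) E {..<card E}"
proof -
  have i: "inj_on (rk h E) E"
  proof (rule inj_onI)
    fix x y assume x: "x \<in> E" and y: "y \<in> E" and e: "rk h E x = rk h E y"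
    show "x = y"
    proof (rule ccontr)
      assume "x \<noteq> y"
      hence "h x \<noteq> h y" using inj x y by (meson inj_on_def)
      hence "h x < h y \<or> h y < h x" by auto
      thus False using rk_less[OF fin inj x y] rk_less[OF fin inj y x] e by auto
    qed
  qed
  have s: "rk h E ` E \<subseteq> {..<card E}"
  proof
    fix z assume "z \<in> rk h E ` E"
    then obtain x where x: "x \<in> E" "z = rk h E x" by blast
    have "{e'\<in>E. h e' < h x} \<subseteq> E - {x}" by auto
    hence "rk h E x \<le> card (E - {x})" unfolding rk_def using fin by (simp add: card_mono)
    also have "\<dots> < card E" by (rule card_Diff1_less[OF fin x(1)])
    finally show "z \<in> {..<card E}" using x by simp
  qed
  have "card (rk h E ` E) = card E" using card_image[OF i] .
  hence "rk h E ` E = {..<card E}" using s by (simp add: card_subset_eq)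
  thus ?thesis using i by (simp add: bij_betw_def)
qed

lemma cnt:
  assumes fin: "finite E" and inj: "inj_on h E" and e: "e \<in> E"
  and rows: "\<forall>x\<in>E. fst x = (1::nat) \<or> fst x = 2"
  and W: "\<And>i. W i \<longleftrightarrow> (\<exists>e\<in>E. rk h E e = i \<and> fst e = 1)"
  shows "W (rk h E e) \<longleftrightarrow> fst e = 1"
    "card {j. j < rk h E e \<and> (W j \<longleftrightarrow> fst e = 1)} = card {e'\<in>E. fst e' = fst e \<and> h e' < h e}"
proof -
  have bij: "bij_betw (rk h E) E {..<card E}" using rk_bij[OF fin inj] .
  have injr: "inj_on (rk h E) E" using bij bij_betw_def by blast
  have Wr: "\<And>x. x \<in> E \<Longrightarrow> W (rk h E x) \<longleftrightarrow> fst x = 1"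
  proof -
    fix x assume x: "x \<in> E"
    show "W (rk h E x) \<longleftrightarrow> fst x = 1"
      unfolding W using injr x by (metis inj_on_eq_iff)
  qed
  show "W (rk h E e) \<longleftrightarrow> fst e = 1" using Wr e .
  have "{j. j < rk h E e \<and> (W j \<longleftrightarrow> fst e = 1)} = rk h E ` {e'\<in>E. fst e' = fst e \<and> h e' < h e}"
  proof
    show "rk h E ` {e'\<in>E. fst e' = fst e \<and> h e' < h e} \<subseteq> {j. j < rk h E e \<and> (W j \<longleftrightarrow> fst e = 1)}"
    proof
      fix j assume "j \<in> rk h E ` {e'\<in>E. fst e' = fst e \<and> h e' < h e}"
      then obtain x where x: "x \<in> E" "fst x = fst e" "h x < h e" "j = rk h E x" by blast
      show "j \<in> {j. j < rk h E e \<and> (W j \<longleftrightarrow> fst e = 1)}"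
        using x Wr[OF x(1)] rk_less[OF fin inj x(1) e] by simp
    qed
  next
    show "{j. j < rk h E e \<and> (W j \<longleftrightarrow> fst e = 1)} \<subseteq> rk h E ` {e'\<in>E. fst e' = fst e \<and> h e' < h e}"
    proof
      fix j assume j: "j \<in> {j. j < rk h E e \<and> (W j \<longleftrightarrow> fst e = 1)}"
      have "rk h E e < card E" using bij e bij_betwE by fastforce
      hence "j \<in> rk h E ` E" using j bij by (simp add: bij_betw_def)
      then obtain x where x: "x \<in> E" "j = rk h E x" by blast
      have "h x < h e" using rk_less[OF fin inj x(1) e] j x by simp
      moreover have "fst x = fst e"
      proof -
        have "fst x = 1 \<or> fst x = 2" "fst e = 1 \<or> fst e = 2" using rows x(1) e by auto
        thus ?thesis using Wr[OF x(1)] j x by auto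
      qed
      ultimately show "j \<in> rk h E ` {e'\<in>E. fst e' = fst e \<and> h e' < h e}" using x by blast
    qed
  qed
  moreover have "inj_on (rk h E) {e'\<in>E. fst e' = fst e \<and> h e' < h e}"
    using injr by (rule inj_on_subset) auto
  ultimately show "card {j. j < rk h E e \<and> (W j \<longleftrightarrow> fst e = 1)} = card {e'\<in>E. fst e' = fst e \<and> h e' < h e}"
    by (simp add: card_image)
qed

lemma idx_unique:
  fixes W :: "nat \<Rightarrow> bool"
  assumes "W i = v" "W i' = v" "card {j. j < i \<and> W j = v} = card {j. j < i' \<and> W j = v}"
  shows "i = i'"
proof (rule ccontr)
  have gen: "\<And>a b. a < b \<Longrightarrow> W a = v \<Longrightarrow> card {j. j < a \<and> W j = v} < card {j. j < b \<and> W j = v}"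
  proof -
    fix a b assume ab: "a < b" "W a = v"
    have "{j. j < a \<and> W j = v} \<subset> {j. j < b \<and> W j = v}" using ab by auto
    moreover have "finite {j. j < b \<and> W j = v}" by simp
    ultimately show "card {j. j < a \<and> W j = v} < card {j. j < b \<and> W j = v}" by (simp add: psubset_card_mono)
  qed
  assume "i \<noteq> i'"
  hence "i < i' \<or> i' < i" by auto
  thus False using gen assms by fastforce
qed

lemma topk_pair:
  fixes A :: "nat \<Rightarrow> nat \<Rightarrow> 'a::linorder"
  assumes fin: "finite X" and inj: "inj_on (A r) X"
  shows "top_k k (\<lambda>(i, j). A i j) ({r} \<times> X) = map (Pair r) (top_k k (A r) X)"
proof -
  let ?f = "\<lambda>(i, j). A i j"
  note P = topk_props[OF fin inj, of k]
  have fin2: "finite ({r} \<times> X)" using fin by simp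
  have inj2: "inj_on ?f ({r} \<times> X)" using inj by (auto simp: inj_on_def)
  have "map (Pair r) (top_k k (A r) X) = top_k k ?f ({r} \<times> X)"
  proof (rule topk_unique[OF fin2 inj2])
    show "distinct (map (Pair r) (top_k k (A r) X))" using P(1) by (simp add: distinct_map inj_on_def)
    show "set (map (Pair r) (top_k k (A r) X)) \<subseteq> {r} \<times> X" using P(2) by auto
    show "length (map (Pair r) (top_k k (A r) X)) = min k (card ({r} \<times> X))"
      using P(3) by (simp add: card_cartesian_product_singleton)
    show "sorted_wrt (\<lambda>a b. ?f b < ?f a) (map (Pair r) (top_k k (A r) X))"
      using P(4) by (simp add: sorted_wrt_map)
    show "\<forall>x\<in>set (map (Pair r) (top_k k (A r) X)). \<forall>y\<in>{r} \<times> X - set (map (Pair r) (top_k k (A r) X)). ?f y < ?f x"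
      using P(5) by auto
  qed
  thus ?thesis by simp
qed


definition PB :: "nat \<Rightarrow> (nat \<times> nat) set" where "PB b = {1..2} \<times> {1..b}"
definition ff :: "(nat \<Rightarrow> nat \<Rightarrow> 'a) \<Rightarrow> nat \<times> nat \<Rightarrow> 'a" where "ff A = (\<lambda>(r, c). A r c)"
definition Eset :: "nat \<Rightarrow> nat \<Rightarrow> (nat \<Rightarrow> nat \<Rightarrow> 'a::linorder) \<Rightarrow> (nat \<times> nat) set" where
  "Eset n k A = (\<Union>b\<in>{1..n}. set (top_k k (ff A) (PB b)))"
definition Wd :: "nat \<Rightarrow> nat \<Rightarrow> (nat \<Rightarrow> nat \<Rightarrow> 'a::linorder) \<Rightarrow> nat \<Rightarrow> bool" where
  "Wd n k A i = (\<exists>e\<in>Eset n k A. rk (ff A) (Eset n k A) e = i \<and> fst e = 1)"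
definition tdata :: "nat \<Rightarrow> nat \<Rightarrow> (nat \<Rightarrow> nat \<Rightarrow> 'a::linorder) \<Rightarrow> nat \<times> nat \<Rightarrow> nat" where
  "tdata n k A = (\<lambda>p. if p \<in> PB n then (if p \<notin> Eset n k A then 0
      else if Wd n k A (rk id (Eset n k A) p) then 1 else 2) else undefined)"

lemma PB_mono: "b \<le> n \<Longrightarrow> PB b \<subseteq> PB n" unfolding PB_def by auto

lemma injP: "A \<in> arrays2 2 n \<Longrightarrow> inj_on (ff A) (PB n)"
  unfolding arrays2_def PB_def ff_def by simp

lemma injrow: assumes "A \<in> arrays2 2 n" "r \<in> {1,2}" shows "inj_on (A r) {1..n}"
proof -
  have "inj_on (ff A) (PB n)" using injP[OF assms(1)] .
  show ?thesis
  proof (rule inj_onI)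
    fix x y assume xy: "x \<in> {1..n}" "y \<in> {1..n}" "A r x = A r y"
    have "(r, x) \<in> PB n" "(r, y) \<in> PB n" using xy assms(2) unfolding PB_def by auto
    moreover have "ff A (r, x) = ff A (r, y)" using xy unfolding ff_def by simp
    ultimately show "x = y" using \<open>inj_on (ff A) (PB n)\<close> by (meson inj_onD prod.inject)
  qed
qed

lemma Esub: "Eset n k A \<subseteq> PB n"
proof -
  have "\<And>b. b \<in> {1..n} \<Longrightarrow> set (top_k k (ff A) (PB b)) \<subseteq> PB n"
  proof -
    fix b assume b: "b \<in> {1..n}"
    have "set (top_k k (ff A) (PB b)) \<subseteq> PB b"
      unfolding top_k_def by (auto dest: in_set_takeD simp: PB_def)
    thus "set (top_k k (ff A) (PB b)) \<subseteq> PB n" using PB_mono[of b n] b by auto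
  qed
  thus ?thesis unfolding Eset_def by blast
qed

lemma finPB: "finite (PB b)" unfolding PB_def by simp

lemma rowE:
  fixes A :: "nat \<Rightarrow> nat \<Rightarrow> 'a::linorder"
  assumes A: "A \<in> arrays2 2 n" and rc: "(r, c) \<in> Eset n k A"
  shows "r \<in> {1,2} \<and> (\<exists>b\<in>{1..n}. c \<in> set (top_k k (A r) {1..b}))"
proof -
  obtain b where b: "b \<in> {1..n}" "(r, c) \<in> set (top_k k (ff A) (PB b))" using rc unfolding Eset_def by blast
  have injb: "inj_on (ff A) (PB b)" using injP[OF A] PB_mono[of b n] b inj_on_subset by auto
  have m: "(r, c) \<in> PB b" "card {y\<in>PB b. ff A (r, c) < ff A y} < k"
    using topk_mem[OF finPB injb] b(2) by auto
  have r: "r \<in> {1,2}" and c: "c \<in> {1..b}" using m(1) unfolding PB_def by auto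
  have injr: "inj_on (A r) {1..b}" using injrow[OF A r] b by (auto intro: inj_on_subset)
  have "Pair r ` {y\<in>{1..b}. A r c < A r y} \<subseteq> {y\<in>PB b. ff A (r, c) < ff A y}"
    using r unfolding PB_def ff_def by auto
  hence "card (Pair r ` {y\<in>{1..b}. A r c < A r y}) \<le> card {y\<in>PB b. ff A (r, c) < ff A y}"
    using finPB by (intro card_mono) auto
  moreover have "card (Pair r ` {y\<in>{1..b}. A r c < A r y}) = card {y\<in>{1..b}. A r c < A r y}"
    by (rule card_image) (auto simp: inj_on_def)
  ultimately have "card {y\<in>{1..b}. A r c < A r y} < k" using m(2) by simp
  hence "c \<in> set (top_k k (A r) {1..b})" using topk_mem[OF _ injr] c by simp
  thus ?thesis using r b by blast
qed


lemma roword: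
  fixes A A' :: "nat \<Rightarrow> nat \<Rightarrow> 'a::linorder"
  assumes A: "A \<in> arrays2 2 n" and A': "A' \<in> arrays2 2 n"
  and rows: "\<And>r j. r \<in> {1,2} \<Longrightarrow> j \<in> {1..n} \<Longrightarrow> top_k k (A r) {1..j} = top_k k (A' r) {1..j}"
  and x: "(r, c) \<in> Eset n k A" and y: "(r, c') \<in> Eset n k A"
  shows "A r c < A r c' \<longleftrightarrow> A' r c < A' r c'"
proof -
  obtain b1 where r: "r \<in> {1,2}" and b1: "b1 \<in> {1..n}" "c \<in> set (top_k k (A r) {1..b1})"
    using rowE[OF A x] by blast
  obtain b2 where b2: "b2 \<in> {1..n}" "c' \<in> set (top_k k (A r) {1..b2})"
    using rowE[OF A y] by blast
  have inj: "\<And>b. b \<in> {1..n} \<Longrightarrow> inj_on (A r) {1..b} \<and> inj_on (A' r) {1..b}"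
    using injrow[OF A r] injrow[OF A' r] by (auto intro: inj_on_subset)
  have c1: "c \<in> {1..b1}" using b1(2) topk_props(2)[OF _ conjunct1[OF inj[OF b1(1)]], of k] by blast
  have c2: "c' \<in> {1..b2}" using b2(2) topk_props(2)[OF _ conjunct1[OF inj[OF b2(1)]], of k] by blast
  show ?thesis
  proof (cases "c' \<le> b1")
    case True
    hence "c' \<in> {1..b1}" using c2 by auto
    thus ?thesis using topk_order[OF _ conjunct1[OF inj[OF b1(1)]] conjunct2[OF inj[OF b1(1)]]
        rows[OF r b1(1)] b1(2)] by simp
  next
    case False
    hence cc: "c \<in> {1..b2}" "c \<noteq> c'" using c1 c2 by auto
    have o: "A r c' < A r c \<longleftrightarrow> A' r c' < A' r c"
      using topk_order[OF _ conjunct1[OF inj[OF b2(1)]] conjunct2[OF inj[OF b2(1)]]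
        rows[OF r b2(1)] b2(2) cc(1)] by simp
    have "A r c \<noteq> A r c'" using cc c2 inj[OF b2(1)] by (meson inj_on_def)
    moreover have "A' r c \<noteq> A' r c'" using cc c2 inj[OF b2(1)] by (meson inj_on_def)
    ultimately show ?thesis using o by (meson linorder_neqE_linordered_idom less_asym linorder_neqE)
  qed
qed

lemma core:
  fixes A A' :: "nat \<Rightarrow> nat \<Rightarrow> 'a::linorder"
  assumes A: "A \<in> arrays2 2 n" and A': "A' \<in> arrays2 2 n"
  and rows: "\<And>r j. r \<in> {1,2} \<Longrightarrow> j \<in> {1..n} \<Longrightarrow> top_k k (A r) {1..j} = top_k k (A' r) {1..j}"
  and td: "tdata n k A = tdata n k A'"
  and b: "b \<in> {1..n}"
  shows "top_k k (ff A) (PB b) = top_k k (ff A') (PB b)"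
proof -
  define E where "E = Eset n k A"
  have finE: "finite E" using Esub finPB E_def finite_subset by metis
  have injE: "inj_on (ff A) E" using injP[OF A] Esub E_def inj_on_subset by metis
  have EE: "Eset n k A' = E"
  proof -
    have h: "\<And>B. Eset n k B = {p\<in>PB n. tdata n k B p \<noteq> 0}"
      using Esub unfolding tdata_def by auto
    show ?thesis unfolding E_def by (simp only: h td)
  qed
  have injE': "inj_on (ff A') E" using injP[OF A'] Esub EE inj_on_subset by metis
  define m where "m = card E"
  have WW: "\<And>i. i < m \<Longrightarrow> Wd n k A i = Wd n k A' i"
  proof -
    fix i assume i: "i < m"
    have "bij_betw (rk id E) E {..<card E}" by (rule rk_bij[OF finE]) simp
    then obtain p where p: "p \<in> E" "rk id E p = i" using i m_def by (metis bij_betw_iff_bijections lessThan_iff)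
    have pP: "p \<in> PB n" using p Esub E_def by blast
    have "tdata n k A p = tdata n k A' p" using td by simp
    thus "Wd n k A i = Wd n k A' i" using p pP EE unfolding tdata_def E_def
      by (auto split: if_splits)
  qed
  have rowsE: "\<forall>x\<in>E. fst x = (1::nat) \<or> fst x = 2" using Esub E_def unfolding PB_def by fastforce
  have rankeq: "\<And>e. e \<in> E \<Longrightarrow> rk (ff A) E e = rk (ff A') E e"
  proof -
    fix e assume e: "e \<in> E"
    define v where "v = (fst e = 1)"
    note C = cnt[OF finE injE e rowsE, of "Wd n k A"]
    note C' = cnt[OF finE injE' e rowsE, of "Wd n k A'"]
    have W1: "\<And>i. Wd n k A i = (\<exists>e\<in>E. rk (ff A) E e = i \<and> fst e = 1)" unfolding Wd_def E_def by simp
    have W2: "\<And>i. Wd n k A' i = (\<exists>e\<in>E. rk (ff A') E e = i \<and> fst e = 1)" unfolding Wd_def using EE by simp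
    have bnd: "rk (ff A) E e < m" "rk (ff A') E e < m"
      using rk_bij[OF finE injE] rk_bij[OF finE injE'] e m_def by (auto dest: bij_betwE)
    have seteq: "{e'\<in>E. fst e' = fst e \<and> ff A e' < ff A e} = {e'\<in>E. fst e' = fst e \<and> ff A' e' < ff A' e}"
    proof -
      have "\<And>e'. e' \<in> E \<Longrightarrow> fst e' = fst e \<Longrightarrow> ff A e' < ff A e \<longleftrightarrow> ff A' e' < ff A' e"
      proof -
        fix e' assume e': "e' \<in> E" "fst e' = fst e"
        obtain r c where rc: "e = (r, c)" by (cases e)
        obtain c' where rc': "e' = (r, c')" using e' rc by (cases e') auto
        show "ff A e' < ff A e \<longleftrightarrow> ff A' e' < ff A' e"
          using roword[OF A A' rows, of r c' c] e' e rc rc' unfolding E_def ff_def by simp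
      qed
      thus ?thesis by blast
    qed
    have a1: "Wd n k A (rk (ff A) E e) = v" using C(1) W1 v_def by blast
    have a2: "Wd n k A (rk (ff A') E e) = v" using C'(1) W2 v_def WW bnd by blast
    have k1: "card {j. j < rk (ff A) E e \<and> Wd n k A j = v} = card {e'\<in>E. fst e' = fst e \<and> ff A e' < ff A e}"
      using C(2) W1 v_def by blast
    have k2: "card {j. j < rk (ff A') E e \<and> Wd n k A' j = v} = card {e'\<in>E. fst e' = fst e \<and> ff A' e' < ff A' e}"
      using C'(2) W2 v_def by blast
    have "{j. j < rk (ff A') E e \<and> Wd n k A' j = v} = {j. j < rk (ff A') E e \<and> Wd n k A j = v}"
      using WW bnd by auto
    thus "rk (ff A) E e = rk (ff A') E e"
      using idx_unique[OF a1 a2] k1 k2 seteq by simp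
  qed
  have ord: "\<And>x y. x \<in> E \<Longrightarrow> y \<in> E \<Longrightarrow> ff A x < ff A y \<longleftrightarrow> ff A' x < ff A' y"
    using rk_less[OF finE injE] rk_less[OF finE injE'] rankeq by metis
  have injb: "inj_on (ff A) (PB b)" "inj_on (ff A') (PB b)"
    using injP[OF A] injP[OF A'] PB_mono[of b n] b inj_on_subset by auto
  have sub: "set (top_k k (ff A) (PB b)) \<subseteq> PB b \<inter> E" "set (top_k k (ff A') (PB b)) \<subseteq> PB b \<inter> E"
    using topk_props(2)[OF finPB injb(1)] topk_props(2)[OF finPB injb(2)] b EE
    unfolding E_def Eset_def by blast+
  have r1: "top_k k (ff A) (PB b \<inter> E) = top_k k (ff A) (PB b)"
    by (rule topk_restrict[OF finPB injb(1) sub(1)]) simp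
  have r2: "top_k k (ff A') (PB b \<inter> E) = top_k k (ff A') (PB b)"
    by (rule topk_restrict[OF finPB injb(2) sub(2)]) simp
  have "top_k k (ff A) (PB b \<inter> E) = top_k k (ff A') (PB b \<inter> E)"
    by (rule topk_cong) (use finPB injb ord in \<open>auto intro: inj_on_subset\<close>)
  thus ?thesis using r1 r2 by simp
qed


lemma go: "(\<lambda>_::nat. 2::real) \<in> o(\<lambda>n. real n)" by real_asymp

lemma pow_bound: "(3::nat) ^ (2 * n) \<le> 2 ^ nat \<lceil>2 * real n * log 2 3\<rceil>"
proof -
  define L where "L = nat \<lceil>2 * real n * log 2 3\<rceil>"
  have Lge: "2 * real n * log 2 3 \<le> real L" unfolding L_def by linarith
  have "real (3 ^ (2 * n)) = 2 powr (2 * real n * log 2 3)"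
  proof -
    have "2 powr (2 * real n * log 2 3) = (2 powr (log 2 3)) powr (2 * real n)"
      by (subst powr_powr) (simp add: mult_ac)
    also have "\<dots> = 3 powr (2 * real n)" by simp
    also have "\<dots> = 3 ^ (2 * n)" using powr_realpow[of 3 "2 * n"] by simp
    finally show ?thesis by simp
  qed
  also have "\<dots> \<le> 2 powr (real L)"
    by (intro powr_mono Lge) simp
  also have "\<dots> = real (2 ^ L)" using powr_realpow[of 2 L] by simp
  finally show ?thesis unfolding L_def by linarith
qed

lemma dw_pad: "dropWhile (\<lambda>b. \<not> b) (replicate m False @ True # x) = True # x"
  by (induct m) auto


lemma main_enc:
  assumes enc: "enc_1sided n k (real s) TYPE('a::linorder)"
  shows "enc_3sided 2 n k (2 * real s + real_of_int \<lceil>2 * real n * log 2 3\<rceil> + 2) TYPE('a)"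
proof -
  obtain E1 :: "(nat \<Rightarrow> 'a) \<Rightarrow> bool list" and D1 :: "bool list \<Rightarrow> nat \<Rightarrow> nat list" where
    h1: "\<forall>B\<in>arrays1 n. real (length (E1 B)) \<le> real s \<and> (\<forall>j\<in>{1..n}. D1 (E1 B) j = top_k k B {1..j})"
    using enc unfolding enc_1sided_def has_encoding_def by blast
  define T where "T = PiE (PB n) (\<lambda>_. {0,1,2::nat})"
  define L where "L = nat \<lceil>2 * real n * log 2 3\<rceil>"
  have finT: "finite T" unfolding T_def by (simp add: finPB finite_PiE)
  have cPB: "card (PB n) = 2 * n" unfolding PB_def by (simp add: card_cartesian_product)
  have cardT: "card T = 3 ^ (2 * n)" unfolding T_def using finPB cPB by (simp add: card_PiE numeral_3_eq_3)
  have cB: "card {xs. set xs \<subseteq> (UNIV::bool set) \<and> length xs = L} = 2 ^ L"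
    using card_lists_length_eq[of "UNIV::bool set" L] finite_UNIV card_UNIV_bool by metis
  have fB: "finite {xs. set xs \<subseteq> (UNIV::bool set) \<and> length xs = L}"
    using finite_lists_length_eq[of "UNIV::bool set" L] by simp
  obtain \<phi> where phi: "\<phi> ` T \<subseteq> {xs. set xs \<subseteq> (UNIV::bool set) \<and> length xs = L}" "inj_on \<phi> T"
    using card_le_inj[OF finT fB] cardT cB pow_bound[of n] L_def by auto
  define pad :: "bool list \<Rightarrow> bool list" where "pad x = replicate (s - length x) False @ True # x" for x
  have padlen: "\<And>x. length x \<le> s \<Longrightarrow> length (pad x) = s + 1" unfolding pad_def by simp
  have padinj: "\<And>x y. pad x = pad y \<Longrightarrow> x = y"
    unfolding pad_def by (metis dw_pad list.inject)
  define code :: "(nat \<Rightarrow> nat \<Rightarrow> 'a) \<Rightarrow> bool list" where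
    "code A = pad (E1 (A 1)) @ pad (E1 (A 2)) @ \<phi> (tdata n k A)" for A
  define ans :: "(nat \<Rightarrow> nat \<Rightarrow> 'a) \<Rightarrow> nat \<times> nat \<times> nat \<Rightarrow> (nat \<times> nat) list" where
    "ans = (\<lambda>A (i, j, b). top_k k (\<lambda>(r, c). A r c) ({i..j} \<times> {1..b}))"
  define D where "D xs q = ans (SOME A. A \<in> arrays2 2 n \<and> code A = xs) q" for xs q
  have rowin: "\<And>(A :: nat \<Rightarrow> nat \<Rightarrow> 'a) r. A \<in> arrays2 2 n \<Longrightarrow> r \<in> {1,2} \<Longrightarrow> A r \<in> arrays1 n"
    unfolding arrays1_def using injrow by blast
  have tdT: "\<And>A :: nat \<Rightarrow> nat \<Rightarrow> 'a. tdata n k A \<in> T" unfolding T_def tdata_def by (auto simp: PiE_def extensional_def)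
  have lenE: "\<And>(A :: nat \<Rightarrow> nat \<Rightarrow> 'a) r. A \<in> arrays2 2 n \<Longrightarrow> r \<in> {1,2} \<Longrightarrow> length (E1 (A r)) \<le> s"
    using h1 rowin by (meson of_nat_le_iff)
  show ?thesis
    unfolding enc_3sided_def has_encoding_def
  proof (intro exI[of _ code] exI[of _ D] ballI conjI)
    fix A :: "nat \<Rightarrow> nat \<Rightarrow> 'a" assume A: "A \<in> arrays2 2 n"
    have l1: "length (pad (E1 (A 1))) = s + 1" using padlen lenE[OF A] by simp
    have l2: "length (pad (E1 (A 2))) = s + 1" using padlen lenE[OF A] by simp
    have l3: "length (\<phi> (tdata n k A)) = L" using phi(1) tdT by blast
    have "length (code A) = 2 * s + 2 + L" unfolding code_def using l1 l2 l3 by simp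
    moreover have "real L = real_of_int \<lceil>2 * real n * log 2 3\<rceil>"
    proof -
      have "0 \<le> 2 * real n * log 2 3" by simp
      thus ?thesis unfolding L_def by simp
    qed
    ultimately show "real (length (code A)) \<le> 2 * real s + real_of_int \<lceil>2 * real n * log 2 3\<rceil> + 2"
      by simp
    fix q :: "nat \<times> nat \<times> nat" assume q: "q \<in> {(i, j, b). 1 \<le> i \<and> i \<le> j \<and> j \<le> 2 \<and> 1 \<le> b \<and> b \<le> n}"
    define A' where "A' = (SOME A'. A' \<in> arrays2 2 n \<and> code A' = code A)"
    have A'': "A' \<in> arrays2 2 n \<and> code A' = code A"
      unfolding A'_def by (rule someI[of _ A]) (use A in simp)
    hence A': "A' \<in> arrays2 2 n" and cc: "code A' = code A" by auto
    have l1': "length (pad (E1 (A' 1))) = s + 1" using padlen lenE[OF A'] by simp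
    have l2': "length (pad (E1 (A' 2))) = s + 1" using padlen lenE[OF A'] by simp
    have e1: "pad (E1 (A' 1)) = pad (E1 (A 1))" and rest1: "pad (E1 (A' 2)) @ \<phi> (tdata n k A') = pad (E1 (A 2)) @ \<phi> (tdata n k A)"
      using cc l1 l1' unfolding code_def by (simp_all add: append_eq_append_conv)
    have e2: "pad (E1 (A' 2)) = pad (E1 (A 2))" and e3: "\<phi> (tdata n k A') = \<phi> (tdata n k A)"
      using rest1 l2 l2' by (simp_all add: append_eq_append_conv)
    have td: "tdata n k A = tdata n k A'" using e3 phi(2) tdT by (metis inj_on_eq_iff)
    have Eq: "\<And>r::nat. r \<in> {1,2} \<Longrightarrow> E1 (A r) = E1 (A' r)" using e1 e2 padinj by auto
    have rows: "\<And>r j. r \<in> {1,2} \<Longrightarrow> j \<in> {1..n} \<Longrightarrow> top_k k (A r) {1..j} = top_k k (A' r) {1..j}"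
    proof -
      fix r j :: nat assume r: "r \<in> {1,2}" and j: "j \<in> {1..n}"
      have "top_k k (A r) {1..j} = D1 (E1 (A r)) j" using h1 rowin[OF A r] j by auto
      also have "\<dots> = D1 (E1 (A' r)) j" using Eq r by simp
      also have "\<dots> = top_k k (A' r) {1..j}" using h1 rowin[OF A' r] j by auto
      finally show "top_k k (A r) {1..j} = top_k k (A' r) {1..j}" .
    qed
    obtain i j b where qq: "q = (i, j, b)" "1 \<le> i" "i \<le> j" "j \<le> 2" "1 \<le> b" "b \<le> n" using q by auto
    have bn: "b \<in> {1..n}" using qq by simp
    have "ans A' q = ans A q"
    proof (cases "i = j")
      case True
      hence r: "i \<in> {1,2}" using qq by auto
      have ij: "{i..j} = {i}" using True by simp
      have inj1: "inj_on (A i) {1..b}" "inj_on (A' i) {1..b}"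
        using injrow[OF A r] injrow[OF A' r] qq by (auto intro: inj_on_subset)
      have "ans A' q = top_k k (\<lambda>(r, c). A' r c) ({i..j} \<times> {1..b})" unfolding ans_def qq(1) by simp
      also have "\<dots> = top_k k (\<lambda>(r, c). A' r c) ({i} \<times> {1..b})" by (simp only: ij)
      also have "\<dots> = map (Pair i) (top_k k (A' i) {1..b})" by (rule topk_pair, simp, rule inj1(2))
      also have "\<dots> = map (Pair i) (top_k k (A i) {1..b})" using rows[OF r bn] by simp
      also have "\<dots> = top_k k (\<lambda>(r, c). A r c) ({i} \<times> {1..b})" by (rule topk_pair[symmetric], simp, rule inj1(1))
      also have "\<dots> = top_k k (\<lambda>(r, c). A r c) ({i..j} \<times> {1..b})" by (simp only: ij)
      also have "\<dots> = ans A q" unfolding ans_def qq(1) by simp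
      finally show ?thesis .
    next
      case False
      hence ij: "{i..j} \<times> {1..b} = PB b" "i = 1" "j = 2" using qq unfolding PB_def by auto
      have "(\<lambda>(r, c). A r c) = ff A" "(\<lambda>(r, c). A' r c) = ff A'" unfolding ff_def by simp_all
      hence "ans A' q = top_k k (ff A') (PB b)" "ans A q = top_k k (ff A) (PB b)"
        unfolding ans_def qq(1) using ij(1) by simp_all
      thus ?thesis using core[OF A A' rows td bn] by simp
    qed
    thus "D (code A) q = (case A of A \<Rightarrow> \<lambda>(i, j, b). top_k k (\<lambda>(r, c). A r c) ({i..j} \<times> {1..b})) q"
      unfolding D_def A'_def[symmetric] by (simp add: ans_def)
  qed
qed

theorem theorem3:
  "\<exists>g :: nat \<Rightarrow> real. g \<in> o(\<lambda>n. real n) \<and>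
     (\<forall>(S :: nat \<Rightarrow> nat \<Rightarrow> nat) n k. 1 \<le> n \<longrightarrow> 1 < k \<longrightarrow> k \<le> 2 * n \<longrightarrow>
        enc_1sided n k (real (S n k)) TYPE('a::linorder) \<longrightarrow>
        enc_3sided 2 n k (2 * real (S n k) + real_of_int \<lceil>2 * real n * log 2 3\<rceil> + g n)
          TYPE('a))"
  using go main_enc by blast

end
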